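(* Let $b\in\mathbb{C}$ and let $\operatorname{ulog}_b(x):=M(0;1;b;x)$, and put $u(x)=e^{\operatorname{ulog}_b(x)}$ and $u^{b}:=e^{b\,\operatorname{ulog}_b(x)}$. Then $u=1+x\,u^{b}$ and, on the disc of convergence of $M(0;1;b;x)$, at every $x$ with $b+(1-b)u(x)\neq0$, $$\frac{d}{dx}\operatorname{ulog}_b(x)=\frac{u(x)^{b}}{b+(1-b)\,u(x)}.$$
   Context: For $m,a,b\in\mathbb{C}$ the master series is the power series $M(m;a;b;x)=m+x+\sum_{\ell\ge 2}\frac{x^\ell}{\ell!}\prod_{\gamma=1}^{\ell-1}(m-a\gamma+b\ell)$. The $b$-logarithm $\operatorname{ulog}_b(x)=M(0;1;b;x)$ is the solution of $y=\ln(1+xe^{by})$ with $y(0)=0$. *)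

theory Defs
  imports "HOL-Analysis.Analysis"
begin

definition master_coeff :: "complex \<Rightarrow> complex \<Rightarrow> complex \<Rightarrow> nat \<Rightarrow> complex" where
  "master_coeff m a b n =
     (if n = 0 then m
      else if n = 1 then 1
      else (\<Prod>g=1..n-1. m - a * of_nat g + b * of_nat n) / of_nat (fact n))"

text \<open>The master series as a function (sum of the power series; meaningful on its disc of convergence).\<close>
definition master :: "complex \<Rightarrow> complex \<Rightarrow> complex \<Rightarrow> complex \<Rightarrow> complex" where
  "master m a b x = (\<Sum>n. master_coeff m a b n * x ^ n)"

definition ulog :: "complex \<Rightarrow> complex \<Rightarrow> complex" where
  "ulog b x = master 0 1 b x"

end

theory Submission
  imports Defs "HOL-Complex_Analysis.Complex_Analysis"
begin

lemma deriv_trunc: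
  fixes H T P :: "complex fps"
  assumes "\<And>j. j \<le> n \<Longrightarrow> H $ j = T $ j" "n \<ge> 1"
  shows "(fps_deriv H * P) $ (n-1) = (fps_deriv T * P) $ (n-1)"
  unfolding fps_mult_nth
  by (rule sum.cong) (use assms in auto)

lemma key_coeff:
  fixes phi :: "complex fps"
  assumes phi0: "phi $ 0 = 1" and kn: "k \<le> n" and n1: "n \<ge> 1"
  shows "(fps_deriv ((fps_X * inverse phi) ^ k) * phi ^ n) $ (n-1) = (if k = n then of_nat n else 0)"
proof (cases "k = 0")
  case True then show ?thesis using n1 by simp
next
  case False
  define psi where "psi = inverse phi"
  define m where "m = n - k"
  have n: "n = k + m" using kn m_def by simp
  have pp: "psi * phi = 1" unfolding psi_def using phi0 by (simp add: inverse_mult_eq_1)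
  have ppk: "psi ^ j * phi ^ j = 1" for j by (metis pp power_mult_distrib power_one)
  have dpsi: "fps_deriv psi = - fps_deriv phi * psi ^ 2"
    unfolding psi_def using phi0 by (simp add: fps_inverse_deriv)
  have "fps_deriv ((fps_X * psi) ^ k) = fps_deriv (fps_X ^ k * psi ^ k)"
    by (simp add: power_mult_distrib)
  also have "\<dots> = fps_const (of_nat k) * fps_X ^ (k-1) * psi ^ k
       + fps_X ^ k * (fps_const (of_nat k) * fps_deriv psi * psi ^ (k-1))"
    by (simp add: fps_deriv_power)
  finally have d: "fps_deriv ((fps_X * psi) ^ k) = \<dots>" .
  have t1: "fps_const (of_nat k) * fps_X ^ (k-1) * psi ^ k * phi ^ n
        = fps_X ^ (k-1) * (fps_const (of_nat k) * phi ^ m)"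
  proof -
    have "psi ^ k * phi ^ n = phi ^ m" using ppk[of k] n by (simp add: power_add mult.assoc[symmetric])
    then show ?thesis by (metis (no_types, lifting) mult.assoc mult.left_commute)
  qed
  have t2: "fps_X ^ k * (fps_const (of_nat k) * fps_deriv psi * psi ^ (k-1)) * phi ^ n
        = fps_X ^ k * (- (fps_const (of_nat k) * fps_deriv phi * (psi * phi ^ m)))"
  proof -
    obtain k' where k': "k = Suc k'" using False not0_implies_Suc by blast
    have "psi ^ 2 * psi ^ (k-1) = psi * psi ^ k" unfolding k' by (simp add: power2_eq_square)
    hence "psi ^ 2 * psi ^ (k-1) * phi ^ n = psi * phi ^ m"
      using ppk[of k] n by (simp add: power_add algebra_simps)
    then show ?thesis unfolding dpsi by (simp add: algebra_simps)
  qed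
  have c1: "(fps_X ^ (k-1) * (fps_const (of_nat k) * phi ^ m)) $ (n-1) = of_nat k * (phi ^ m) $ m"
    using False n by (simp add: fps_X_power_mult_nth)
  have c2: "(fps_X ^ k * (- (fps_const (of_nat k) * fps_deriv phi * (psi * phi ^ m)))) $ (n-1)
        = (if m = 0 then 0 else - of_nat k * (phi ^ m) $ m)"
  proof (cases "m = 0")
    case True then show ?thesis using n False by (simp add: fps_X_power_mult_nth)
  next
    case m0: False
    obtain m' where m': "m = Suc m'" using m0 not0_implies_Suc by blast
    have "psi * phi ^ m = phi ^ (m-1)" unfolding m' using pp
      by (simp add: mult.assoc[symmetric])
    moreover have "(fps_deriv phi * phi ^ (m-1)) $ (m-1) = (phi ^ m) $ m"
    proof -
      have "fps_deriv (phi ^ m) = fps_const (of_nat m) * (fps_deriv phi * phi ^ (m-1))"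
        by (simp add: fps_deriv_power mult.assoc)
      hence "of_nat m * (fps_deriv phi * phi ^ (m-1)) $ (m-1) = fps_deriv (phi ^ m) $ (m-1)" by simp
      also have "\<dots> = of_nat m * (phi ^ m) $ m" using m0 by simp
      finally show ?thesis using m0 by simp
    qed
    ultimately show ?thesis using n m0 False
      by (simp add: fps_X_power_mult_nth mult.assoc)
  qed
  have "(fps_deriv ((fps_X * inverse phi) ^ k) * phi ^ n) $ (n-1)
      = (fps_X ^ (k-1) * (fps_const (of_nat k) * phi ^ m)) $ (n-1)
        + (fps_X ^ k * (- (fps_const (of_nat k) * fps_deriv phi * (psi * phi ^ m)))) $ (n-1)"
    unfolding psi_def[symmetric] d distrib_right t1 t2 by simp
  also have "\<dots> = (if k = n then of_nat n else 0)"
    unfolding c1 c2 using n by auto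
  finally show ?thesis .
qed

lemma lagrange:
  fixes phi H :: "complex fps"
  assumes phi0: "phi$0 = 1" and H0: "H$0 = 0" and n1: "n \<ge> 1"
  shows "of_nat n * (H oo fps_inv (fps_X * inverse phi)) $ n
          = (fps_deriv H * phi ^ n) $ (n-1)"
proof -
  define g where "g = fps_X * inverse phi"
  define W where "W = fps_inv g"
  define K where "K = H oo W"
  have g0: "g $ 0 = 0" and g1: "g $ 1 = 1" unfolding g_def using phi0 by simp_all
  have W0: "W $ 0 = 0" unfolding W_def fps_inv_def by simp
  have Kg: "K oo g = H"
  proof -
    have "K oo g = H oo (W oo g)" unfolding K_def using fps_compose_assoc[OF g0 W0] by simp
    also have "W oo g = fps_X" unfolding W_def using fps_inv[OF g0] g1 by simp
    finally show ?thesis by simp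
  qed
  have gk: "(g ^ k) $ j = 0" if "j < k" for j k
    unfolding g_def power_mult_distrib using that by (simp add: fps_X_power_mult_nth)
  define T where "T = (\<Sum>k=0..n. fps_const (K$k) * g^k)"
  have TH: "H $ j = T $ j" if "j \<le> n" for j
  proof -
    have "T $ j = (\<Sum>k=0..n. K$k * (g^k) $ j)" unfolding T_def fps_sum_nth by simp
    also have "\<dots> = (\<Sum>k=0..j. K$k * (g^k) $ j)"
    proof (rule sum.mono_neutral_right)
      show "\<forall>i\<in>{0..n} - {0..j}. K $ i * (g ^ i) $ j = 0" using gk by auto
    qed (use that in auto)
    also have "\<dots> = (K oo g) $ j" by (simp add: fps_compose_nth)
    finally show ?thesis using Kg by simp
  qed
  have "(fps_deriv H * phi ^ n) $ (n-1) = (fps_deriv T * phi ^ n) $ (n-1)"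
    by (rule deriv_trunc[OF TH n1])
  also have "fps_deriv T * phi ^ n = (\<Sum>k=0..n. fps_const (K$k) * (fps_deriv (g^k) * phi ^ n))"
    unfolding T_def fps_deriv_sum sum_distrib_right by (simp add: mult.assoc)
  also have "\<dots> $ (n-1) = (\<Sum>k=0..n. K$k * (if k = n then of_nat n else 0))"
    unfolding fps_sum_nth g_def using key_coeff[OF phi0 _ n1] by simp
  also have "\<dots> = (\<Sum>k=0..n. if k = n then K$k * of_nat n else 0)"
    by (rule sum.cong) auto
  also have "\<dots> = K $ n * of_nat n" by simp
  finally show ?thesis unfolding K_def W_def g_def by simp
qed

lemma ode_unique:
  fixes f g a :: "complex fps"
  assumes "fps_deriv f = a * f" "fps_deriv g = a * g" "f $ 0 = 1" "g $ 0 = 1"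
  shows "f = g"
proof -
  define q where "q = f * inverse g"
  have gi: "inverse g * g = 1" using assms(4) by (simp add: inverse_mult_eq_1)
  have "fps_deriv q = fps_deriv f * inverse g + f * (- fps_deriv g * (inverse g)^2)"
    unfolding q_def using assms(4) by (simp add: fps_inverse_deriv)
  also have "\<dots> = a * f * inverse g - a * f * (inverse g * g) * inverse g"
    unfolding assms(1,2) by (simp add: power2_eq_square algebra_simps)
  also have "\<dots> = 0" unfolding gi by simp
  finally have "q = fps_const (q $ 0)" by simp
  also have "q $ 0 = 1" unfolding q_def using assms(3,4) by simp
  finally have "q = 1" by simp
  have "f = f * (inverse g * g)" unfolding gi by simp
  also have "\<dots> = q * g" unfolding q_def by (simp add: mult.assoc)
  finally show ?thesis using \<open>q = 1\<close> by simp
qed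

lemma master_coeff_gchoose:
  fixes b :: complex
  assumes "n \<ge> 1"
  shows "master_coeff 0 1 b n = ((of_nat n * b - 1) gchoose (n-1)) / of_nat n"
proof (cases "n = 1")
  case True then show ?thesis by (simp add: master_coeff_def)
next
  case False
  then obtain j where n: "n = Suc (Suc j)" using assms
    by (metis One_nat_def Suc_le_D le_SucE not0_implies_Suc)
  have "(\<Prod>g=1..n-1. 0 - 1 * of_nat g + b * of_nat n) = (\<Prod>i=0..j. (of_nat n * b - 1) - of_nat i)"
    unfolding n using prod.shift_bounds_cl_Suc_ivl[of "\<lambda>g. 0 - 1 * of_nat g + b * of_nat (Suc (Suc j)) :: complex" 0 j]
    by (simp add: algebra_simps)
  moreover have "((of_nat n * b - 1) gchoose (n-1)) = (\<Prod>i=0..j. (of_nat n * b - 1) - of_nat i) / fact (Suc j)"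
    unfolding gbinomial_prod_rev n by (simp add: atLeastLessThanSuc_atLeastAtMost)
  ultimately show ?thesis unfolding master_coeff_def using n
    by (simp add: field_simps fact_Suc[of "Suc j"])
qed

lemma formal_main:
  fixes b :: complex and Y E1 Eb :: "complex fps"
  assumes Y: "Y = Abs_fps (master_coeff 0 1 b)"
    and E1: "fps_deriv E1 = fps_deriv Y * E1" "E1 $ 0 = 1"
    and Eb: "fps_deriv Eb = fps_const b * fps_deriv Y * Eb" "Eb $ 0 = 1"
  shows "E1 = 1 + fps_X * Eb"
proof -
  define phi where "phi = fps_binomial b"
  define g where "g = fps_X * inverse phi"
  define W where "W = fps_inv g"
  define K where "K = fps_ln 1 oo W"
  have phi0: "phi $ 0 = 1" unfolding phi_def by simp
  have g0: "g $ 0 = 0" and g1: "g $ 1 = 1" unfolding g_def using phi0 by simp_all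
  have W0: "W $ 0 = 0" unfolding W_def fps_inv_def by simp
  have KY: "K = Y"
  proof (rule fps_ext)
    fix n
    show "K $ n = Y $ n"
    proof (cases "n = 0")
      case True then show ?thesis unfolding K_def Y by (simp add: master_coeff_def)
    next
      case False
      hence n1: "n \<ge> 1" by simp
      have "of_nat n * K $ n = (fps_deriv (fps_ln 1) * phi ^ n) $ (n-1)"
        unfolding K_def W_def g_def using lagrange[OF phi0 _ n1, of "fps_ln 1"] by simp
      also have "fps_deriv (fps_ln 1) * phi ^ n = fps_binomial (of_nat n * b - 1)"
        unfolding fps_ln_deriv phi_def fps_binomial_power fps_binomial_minus_one[symmetric]
        by (simp add: fps_binomial_add_mult[symmetric])
      finally have "of_nat n * K $ n = (of_nat n * b - 1) gchoose (n-1)" by simp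
      hence "K $ n = ((of_nat n * b - 1) gchoose (n-1)) / of_nat n" using n1
        by (simp add: field_simps)
      then show ?thesis unfolding Y using master_coeff_gchoose[OF n1] by simp
    qed
  qed
  have oneW: "(1 + fps_X) oo W = 1 + W"
    using W0 by (simp add: fps_compose_add_distrib)
  have invW: "inverse (1 + fps_X) oo W = inverse (1 + W)"
    using fps_inverse_compose[OF W0, of "1 + fps_X"] oneW by simp
  have dK: "fps_deriv K = inverse (1 + W) * fps_deriv W"
    unfolding K_def fps_compose_deriv[OF W0] fps_ln_deriv using invW by simp
  have W1: "inverse (1 + W) * (1 + W) = 1" using W0 by (simp add: inverse_mult_eq_1)
  have F1: "E1 = 1 + W"
  proof (rule ode_unique[OF E1(1)])
    show "fps_deriv (1 + W) = fps_deriv Y * (1 + W)"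
      unfolding KY[symmetric] dK using W1 by (simp add: algebra_simps)
  qed (use E1 W0 in simp_all)
  define Fb where "Fb = phi oo W"
  have Fb0: "Fb $ 0 = 1" unfolding Fb_def using phi0 by simp
  have dphi: "fps_deriv phi = fps_const b * phi * inverse (1 + fps_X)"
    unfolding phi_def fps_binomial_deriv by (simp add: fps_divide_unit)
  have dFb: "fps_deriv Fb = fps_const b * Fb * inverse (1 + W) * fps_deriv W"
    unfolding Fb_def fps_compose_deriv[OF W0] dphi
    using invW W0 by (simp add: fps_compose_mult_distrib)
  have F2: "Eb = Fb"
  proof (rule ode_unique[OF Eb(1)])
    show "fps_deriv Fb = fps_const b * fps_deriv Y * Fb"
      unfolding KY[symmetric] dK dFb by (simp add: algebra_simps)
  qed (use Eb Fb0 in simp_all)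
  have "g oo W = fps_X" unfolding W_def using fps_inv_right[OF g0] g1 by simp
  moreover have "g oo W = W * inverse Fb"
    unfolding g_def Fb_def using W0 phi0
    by (simp add: fps_compose_mult_distrib fps_inverse_compose)
  ultimately have "W * inverse Fb = fps_X" by simp
  hence "W * (inverse Fb * Fb) = fps_X * Fb" by (simp add: mult.assoc[symmetric])
  hence "W = fps_X * Fb" using Fb0 by (simp add: inverse_mult_eq_1)
  thus ?thesis using F1 F2 by simp
qed

lemma fps_expansion_unique:
  fixes f :: "complex \<Rightarrow> complex"
  assumes "f has_fps_expansion F" "f has_fps_expansion G"
  shows "F = G"
  using fps_nth_fps_expansion[OF assms(1)] fps_nth_fps_expansion[OF assms(2)]
  by (intro fps_ext) simp

lemma exp_expansion_ode:
  fixes Y :: "complex fps" and c :: complex and D :: "complex set"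
  assumes D: "open D" "0 \<in> D" "D \<subseteq> eball 0 (fps_conv_radius Y)"
  defines "e \<equiv> (\<lambda>z. exp (c * eval_fps Y z))"
  shows "e has_fps_expansion fps_expansion e 0"
    and "fps_deriv (fps_expansion e 0) = fps_const c * fps_deriv Y * fps_expansion e 0"
    and "fps_expansion e 0 $ 0 = exp (c * Y $ 0)"
proof -
  have R: "fps_conv_radius Y > 0" using D by (auto simp: zero_ereal_def)
  have hol: "e holomorphic_on D" unfolding e_def
    using D by (intro holomorphic_intros) auto
  show ex: "e has_fps_expansion fps_expansion e 0"
    using D hol by (intro has_fps_expansion_fps_expansion) auto
  have yex: "eval_fps Y has_fps_expansion Y" using R by (rule eval_fps_has_fps_expansion)
  have m: "(\<lambda>z. c * deriv (eval_fps Y) z * e z) has_fps_expansion fps_const c * fps_deriv Y * fps_expansion e 0"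
    using has_fps_expansion_mult[OF has_fps_expansion_cmult_left[OF has_fps_expansion_deriv[OF yex], of c] ex]
    by (simp add: mult.assoc)
  have eq: "deriv e z = c * deriv (eval_fps Y) z * e z" if "z \<in> D" for z
  proof -
    have nz: "norm z < fps_conv_radius Y" using subsetD[OF D(3) that] by (simp add: dist_0_norm)
    have dy: "(eval_fps Y has_field_derivative eval_fps (fps_deriv Y) z) (at z)"
      using has_field_derivative_eval_fps[OF nz] by blast
    have "(e has_field_derivative exp (c * eval_fps Y z) * (c * eval_fps (fps_deriv Y) z)) (at z)"
      unfolding e_def using nz by (auto intro!: derivative_eq_intros dy)
    moreover have "deriv (eval_fps Y) z = eval_fps (fps_deriv Y) z" using dy DERIV_imp_deriv by blast
    ultimately show ?thesis using DERIV_imp_deriv unfolding e_def by (simp add: algebra_simps)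
  qed
  have ev: "eventually (\<lambda>z. deriv e z = c * deriv (eval_fps Y) z * e z) (nhds 0)"
    using D by (intro eventually_nhds_in_open[THEN eventually_mono]) (auto simp: eq)
  have "deriv e has_fps_expansion fps_const c * fps_deriv Y * fps_expansion e 0"
    using has_fps_expansion_cong[OF ev refl] m by simp
  thus "fps_deriv (fps_expansion e 0) = fps_const c * fps_deriv Y * fps_expansion e 0"
    using has_fps_expansion_deriv[OF ex] fps_expansion_unique by blast
  show "fps_expansion e 0 $ 0 = exp (c * Y $ 0)"
    using fps_nth_fps_expansion[OF ex, of 0] by (simp add: e_def eval_fps_at_0)
qed

theorem mainTheorem11:
  fixes b x :: complex
  assumes "ereal (norm x) < conv_radius (master_coeff 0 1 b)"
  shows "exp (ulog b x) = 1 + x * exp (b * ulog b x) \<and>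
         (b + (1 - b) * exp (ulog b x) \<noteq> 0 \<longrightarrow>
           (ulog b has_field_derivative
              exp (b * ulog b x) / (b + (1 - b) * exp (ulog b x))) (at x))"
proof -
  define Y where "Y = Abs_fps (master_coeff 0 1 b)"
  define D where "D = eball (0::complex) (fps_conv_radius Y)"
  have RY: "fps_conv_radius Y = conv_radius (master_coeff 0 1 b)"
    unfolding fps_conv_radius_def Y_def by simp
  have ul: "ulog b = eval_fps Y"
    by (rule ext) (simp add: ulog_def master_def eval_fps_def Y_def)
  have xD: "x \<in> D" unfolding D_def using assms RY by simp
  have D0: "0 \<in> D" using xD unfolding D_def
    by (auto simp: zero_ereal_def intro: le_less_trans[of _ "ereal (norm x)"])
  have oD: "open D" "connected D" unfolding D_def by auto
  define e1 where "e1 = (\<lambda>z. exp (1 * eval_fps Y z))"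
  define eb where "eb = (\<lambda>z. exp (b * eval_fps Y z))"
  note o1 = exp_expansion_ode[OF oD(1) D0, of Y 1, folded e1_def]
  note ob = exp_expansion_ode[OF oD(1) D0, of Y b, folded eb_def]
  have Y0: "Y $ 0 = 0" unfolding Y_def by (simp add: master_coeff_def)
  have FE: "fps_expansion e1 0 = 1 + fps_X * fps_expansion eb 0"
    apply (rule formal_main[OF Y_def])
    using o1 ob Y0 D_def by simp_all
  define G where "G = (\<lambda>z. e1 z - 1 - z * eb z)"
  have "G has_fps_expansion fps_expansion e1 0 - 1 - fps_X * fps_expansion eb 0"
    unfolding G_def using o1(1) ob(1) D_def
    by (intro fps_expansion_intros) auto
  hence G0: "G has_fps_expansion 0" using FE by simp
  have Ghol: "G holomorphic_on D" unfolding G_def e1_def eb_def D_def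
    by (intro holomorphic_intros) auto
  have Gz: "G z = 0" if "z \<in> D" for z
    using has_fps_expansion_0_analytic_continuation[OF G0 Ghol oD(1) oD(2) D0 that] .
  have id: "exp (eval_fps Y z) = 1 + z * exp (b * eval_fps Y z)" if "z \<in> D" for z
    using Gz[OF that] unfolding G_def e1_def eb_def by (simp add: algebra_simps)
  show ?thesis
  proof
    show "exp (ulog b x) = 1 + x * exp (b * ulog b x)" unfolding ul using id[OF xD] .
  next
    define y where "y = eval_fps Y x"
    define y' where "y' = eval_fps (fps_deriv Y) x"
    have nx: "ereal (norm x) < fps_conv_radius Y" using xD D_def by (simp add: dist_0_norm)
    have dy: "(eval_fps Y has_field_derivative y') (at x)"
      using has_field_derivative_eval_fps[OF nx, of UNIV] unfolding y'_def by simp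
    have d1: "((\<lambda>z. exp (eval_fps Y z)) has_field_derivative exp y * y') (at x)"
      unfolding y_def by (rule DERIV_fun_exp[OF dy])
    have dE: "((\<lambda>z. exp (b * eval_fps Y z)) has_field_derivative exp (b * y) * (b * y')) (at x)"
      unfolding y_def by (rule DERIV_fun_exp[OF DERIV_cmult[OF dy]])
    have d2: "((\<lambda>z. 1 + z * exp (b * eval_fps Y z)) has_field_derivative
               exp (b * y) + x * (exp (b * y) * (b * y'))) (at x)"
      using DERIV_add[OF DERIV_const[of 1] DERIV_mult[OF DERIV_ident dE[unfolded y_def]]]
      unfolding y_def by (simp add: algebra_simps)
    have d1': "((\<lambda>z. 1 + z * exp (b * eval_fps Y z)) has_field_derivative exp y * y') (at x)"
      by (rule has_field_derivative_transform_within_open[OF d1 oD(1) xD id])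
    have E: "exp y * y' = exp (b * y) + x * (exp (b * y) * (b * y'))"
      using DERIV_unique[OF d1' d2] .
    have I: "exp y = 1 + x * exp (b * y)" using id[OF xD] y_def by simp
    have key: "y' * (b + (1 - b) * exp y) = exp (b * y)"
    proof -
      have "y' * (b + (1 - b) * exp y) = exp y * y' - b * y' * (exp y - 1)"
        by (simp add: algebra_simps)
      also have "exp y - 1 = x * exp (b * y)" using I by simp
      finally show ?thesis using E by (simp add: algebra_simps)
    qed
    show "b + (1 - b) * exp (ulog b x) \<noteq> 0 \<longrightarrow>
           (ulog b has_field_derivative exp (b * ulog b x) / (b + (1 - b) * exp (ulog b x))) (at x)"
    proof
      assume nz: "b + (1 - b) * exp (ulog b x) \<noteq> 0"
      hence "exp (b * ulog b x) / (b + (1 - b) * exp (ulog b x)) = y'"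
        using key unfolding ul y_def by (simp add: field_simps)
      thus "(ulog b has_field_derivative exp (b * ulog b x) / (b + (1 - b) * exp (ulog b x))) (at x)"
        using dy ul by simp
    qed
  qed
qed

end
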